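(* Let $X=X(G,C)$ be an oriented Cayley graph for a finite group $G$ of order $n>2$, with skew-symmetric adjacency matrix $A$. If there is a time $t$ such that all entries of $U(t)=\exp(-tA)$ have the same modulus (uniform mixing), then $n$ is an even perfect square.
   Context: For a finite group $G$ (multiplicative), $A_g$ is the permutation matrix with $(A_g)_{a,b}=1$ iff $ba^{-1}=g$, and $A_C=\sum_{g\in C}A_g$. An oriented Cayley graph $X(G,C)$ has $1\notin C$ and $C\cap C^{-1}=\emptyset$; its skew-symmetric adjacency matrix is $A=A_C-A_C^T$, with entry $1$ for arcs $a\to b$ ($ba^{-1}\in C$), $-1$ for reverse arcs, and $0$ otherwise. The continuous quantum walk on $X$ has transition matrix $U(t)=\exp(it(iA))=\exp(-tA)$. The group $G$ need not be abelian and $C$ need not be a union of conjugacy classes. *)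

theory Defs
  imports "HOL-Analysis.Analysis" "HOL-Algebra.Group"
begin

text \<open>Square matrices indexed by a finite set S (here the carrier of the group),
represented as functions 'a \<Rightarrow> 'a \<Rightarrow> real; entries outside S are irrelevant.\<close>

definition perm_mat :: "('a, 'b) monoid_scheme \<Rightarrow> 'a \<Rightarrow> 'a \<Rightarrow> 'a \<Rightarrow> real" where
  "perm_mat G g = (\<lambda>a b. if b \<otimes>\<^bsub>G\<^esub> inv\<^bsub>G\<^esub> a = g then 1 else 0)"

definition conn_mat :: "('a, 'b) monoid_scheme \<Rightarrow> 'a set \<Rightarrow> 'a \<Rightarrow> 'a \<Rightarrow> real" where
  "conn_mat G C = (\<lambda>a b. \<Sum>g\<in>C. perm_mat G g a b)"

definition skew_adj :: "('a, 'b) monoid_scheme \<Rightarrow> 'a set \<Rightarrow> 'a \<Rightarrow> 'a \<Rightarrow> real" where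
  "skew_adj G C = (\<lambda>a b. conn_mat G C a b - conn_mat G C b a)"

definition oriented_cayley :: "('a, 'b) monoid_scheme \<Rightarrow> 'a set \<Rightarrow> bool" where
  "oriented_cayley G C \<longleftrightarrow> C \<subseteq> carrier G \<and> \<one>\<^bsub>G\<^esub> \<notin> C \<and> (\<forall>c\<in>C. inv\<^bsub>G\<^esub> c \<notin> C)"

definition mat_mult :: "'a set \<Rightarrow> ('a \<Rightarrow> 'a \<Rightarrow> real) \<Rightarrow> ('a \<Rightarrow> 'a \<Rightarrow> real) \<Rightarrow> 'a \<Rightarrow> 'a \<Rightarrow> real" where
  "mat_mult S M N = (\<lambda>a b. \<Sum>c\<in>S. M a c * N c b)"

fun mat_pow :: "'a set \<Rightarrow> ('a \<Rightarrow> 'a \<Rightarrow> real) \<Rightarrow> nat \<Rightarrow> 'a \<Rightarrow> 'a \<Rightarrow> real" where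
  "mat_pow S M 0 = (\<lambda>a b. if a = b then 1 else 0)"
| "mat_pow S M (Suc k) = mat_mult S (mat_pow S M k) M"

definition mat_exp :: "'a set \<Rightarrow> ('a \<Rightarrow> 'a \<Rightarrow> real) \<Rightarrow> 'a \<Rightarrow> 'a \<Rightarrow> real" where
  "mat_exp S M = (\<lambda>a b. \<Sum>k. mat_pow S M k a b / fact k)"

definition transition :: "('a, 'b) monoid_scheme \<Rightarrow> 'a set \<Rightarrow> real \<Rightarrow> 'a \<Rightarrow> 'a \<Rightarrow> real" where
  "transition G C t = mat_exp (carrier G) (\<lambda>a b. - t * skew_adj G C a b)"

end

theory Submission
  imports Defs
begin

lemma mat_pow_add:
  assumes "finite S" "a \<in> S" "b \<in> S"
  shows "mat_pow S M (i + j) a b = (\<Sum>c\<in>S. mat_pow S M i a c * mat_pow S M j c b)"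
  using assms(3)
proof (induction j arbitrary: b)
  case 0
  have "(\<Sum>c\<in>S. mat_pow S M i a c * mat_pow S M 0 c b) = (\<Sum>c\<in>S. if c = b then mat_pow S M i a c else 0)"
    by (intro sum.cong) auto
  also have "\<dots> = mat_pow S M i a b" using assms(1) 0 by simp
  finally show ?case by simp
next
  case (Suc j)
  have "mat_pow S M (i + Suc j) a b = (\<Sum>d\<in>S. mat_pow S M (i+j) a d * M d b)"
    by (simp add: mat_mult_def)
  also have "\<dots> = (\<Sum>d\<in>S. (\<Sum>c\<in>S. mat_pow S M i a c * mat_pow S M j c d) * M d b)"
    using Suc.IH by (intro sum.cong) auto
  also have "\<dots> = (\<Sum>d\<in>S. \<Sum>c\<in>S. mat_pow S M i a c * mat_pow S M j c d * M d b)"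
    by (simp add: sum_distrib_right)
  also have "\<dots> = (\<Sum>c\<in>S. \<Sum>d\<in>S. mat_pow S M i a c * mat_pow S M j c d * M d b)"
    by (rule sum.swap)
  also have "\<dots> = (\<Sum>c\<in>S. mat_pow S M i a c * (\<Sum>d\<in>S. mat_pow S M j c d * M d b))"
    by (simp add: sum_distrib_left mult.assoc)
  finally show ?case by (simp add: mat_mult_def)
qed

lemma mat_pow_one:
  assumes "finite S" "a \<in> S"
  shows "mat_pow S M 1 a b = M a b"
proof -
  have "mat_pow S M 1 a b = (\<Sum>c\<in>S. (if a = c then 1 else 0) * M c b)"
    by (simp only: One_nat_def mat_pow.simps mat_mult_def)
  also have "\<dots> = (\<Sum>c\<in>S. if a = c then M c b else 0)"
    by (intro sum.cong) auto
  also have "\<dots> = M a b" using assms by simp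
  finally show ?thesis .
qed

lemma mat_pow_transp:
  assumes "finite S" "\<And>x y. M y x = - M x y" "a \<in> S" "b \<in> S"
  shows "mat_pow S M j a b = (-1)^j * mat_pow S M j b a"
  using assms(3,4)
proof (induction j arbitrary: a b)
  case 0
  then show ?case by auto
next
  case (Suc j)
  have "mat_pow S M (Suc j) a b = (\<Sum>d\<in>S. mat_pow S M j a d * M d b)"
    by (simp add: mat_mult_def)
  also have "\<dots> = (\<Sum>d\<in>S. (-1)^Suc j * (mat_pow S M 1 b d * mat_pow S M j d a))"
  proof (intro sum.cong refl)
    fix d assume d: "d \<in> S"
    have e1: "mat_pow S M j a d = (-1)^j * mat_pow S M j d a" using Suc.IH[OF Suc.prems(1) d] .
    have e2: "M d b = - M b d" by (rule assms(2))
    have e3: "mat_pow S M 1 b d = M b d" by (rule mat_pow_one[OF assms(1) Suc.prems(2)])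
    show "mat_pow S M j a d * M d b = (-1)^Suc j * (mat_pow S M 1 b d * mat_pow S M j d a)"
      unfolding e1 e2 e3 by simp
  qed
  also have "\<dots> = (-1)^Suc j * (\<Sum>d\<in>S. mat_pow S M 1 b d * mat_pow S M j d a)"
    by (simp only: sum_distrib_left)
  also have "(\<Sum>d\<in>S. mat_pow S M 1 b d * mat_pow S M j d a) = mat_pow S M (1 + j) b a"
    by (rule mat_pow_add[OF assms(1) Suc.prems(2,1), symmetric])
  finally show ?case by simp
qed

lemma mat_pow_bound:
  assumes "finite S" "\<And>x y. \<bar>M x y\<bar> \<le> B" 
  shows "\<bar>mat_pow S M k a b\<bar> \<le> (real (card S) * B)^k"
proof (induction k arbitrary: b)
  case 0
  then show ?case by simp
next
  case (Suc k)
  have B0: "0 \<le> B" using assms(2)[of a a] by linarith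
  have "\<bar>mat_pow S M (Suc k) a b\<bar> \<le> (\<Sum>d\<in>S. \<bar>mat_pow S M k a d * M d b\<bar>)"
    by (simp add: mat_mult_def sum_abs)
  also have "\<dots> \<le> (\<Sum>d\<in>S. (real (card S) * B)^k * B)"
    unfolding abs_mult using Suc assms(2) B0
    by (intro sum_mono mult_mono) auto
  finally show ?case by (simp add: mult_ac)
qed

lemma mat_pow_summable:
  assumes "finite S" "\<And>x y. \<bar>M x y\<bar> \<le> B" 
  shows "summable (\<lambda>k. norm (mat_pow S M k a b / fact k))"
proof (rule summable_comparison_test[OF _ summable_exp[of "real (card S) * B"]])
  show "\<exists>N. \<forall>n\<ge>N. norm (norm (mat_pow S M n a b / fact n)) \<le> inverse (fact n) * (real (card S) * B) ^ n"
    using mat_pow_bound[OF assms] by (auto simp: field_simps)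
qed


lemma alt_binom: "(\<Sum>i\<le>k. (-1::real)^(k-i) * (k choose i)) = (if k = 0 then 1 else 0)"
proof -
  have "(1 + (-1::real))^k = (\<Sum>i\<le>k. of_nat (k choose i) * 1^i * (-1)^(k-i))"
    by (rule binomial_ring)
  then show ?thesis by (cases k) (simp_all add: mult_ac)
qed

lemma mat_exp_orth:
  assumes S: "finite S" and skew: "\<And>x y. M y x = - M x y" and bnd: "\<And>x y. \<bar>M x y\<bar> \<le> B"
    and a: "a \<in> S" and b: "b \<in> S"
  shows "(\<Sum>c\<in>S. mat_exp S M a c * mat_exp S M b c) = (if a = b then 1 else 0)"
proof -
  define P where "P = mat_pow S M"
  have cs: "(\<lambda>k. \<Sum>i\<le>k. P i a c / fact i * (P (k-i) b c / fact (k-i))) sums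
       (mat_exp S M a c * mat_exp S M b c)" for c
    unfolding mat_exp_def P_def
    by (rule Cauchy_product_sums[OF mat_pow_summable[OF S bnd] mat_pow_summable[OF S bnd]])
  have "(\<lambda>k. \<Sum>c\<in>S. \<Sum>i\<le>k. P i a c / fact i * (P (k-i) b c / fact (k-i))) sums
       (\<Sum>c\<in>S. mat_exp S M a c * mat_exp S M b c)"
    by (rule sums_sum) (rule cs)
  moreover have "(\<Sum>c\<in>S. \<Sum>i\<le>k. P i a c / fact i * (P (k-i) b c / fact (k-i)))
     = (if k = 0 then (if a = b then 1 else 0) else 0)" for k
  proof -
    have "(\<Sum>c\<in>S. \<Sum>i\<le>k. P i a c / fact i * (P (k-i) b c / fact (k-i)))
       = (\<Sum>i\<le>k. (\<Sum>c\<in>S. P i a c * P (k-i) b c) / (fact i * fact (k-i)))"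
      by (subst sum.swap) (simp add: sum_divide_distrib)
    also have "\<dots> = (\<Sum>i\<le>k. ((-1)^(k-i) * P k a b) / (fact i * fact (k-i)))"
    proof (intro sum.cong refl)
      fix i assume "i \<in> {..k}"
      then have ik: "i + (k - i) = k" by simp
      have "(\<Sum>c\<in>S. P i a c * P (k-i) b c) = (\<Sum>c\<in>S. (-1)^(k-i) * (P i a c * P (k-i) c b))"
      proof (intro sum.cong refl)
        fix c assume c: "c \<in> S"
        have "P (k-i) b c = (-1)^(k-i) * P (k-i) c b"
          unfolding P_def by (rule mat_pow_transp[OF S skew b c])
        then show "P i a c * P (k-i) b c = (-1)^(k-i) * (P i a c * P (k-i) c b)"
          by (simp only: mult.left_commute)
      qed
      also have "\<dots> = (-1)^(k-i) * P (i + (k-i)) a b"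
        by (simp only: sum_distrib_left[symmetric] P_def mat_pow_add[OF S a b])
      also have "\<dots> = (-1)^(k-i) * P k a b" by (simp only: ik)
      finally show "(\<Sum>c\<in>S. P i a c * P (k-i) b c) / (fact i * fact (k-i)) =
          ((-1)^(k-i) * P k a b) / (fact i * fact (k-i))" by (simp only:)
    qed
    also have "\<dots> = (\<Sum>i\<le>k. (-1::real)^(k-i) * (k choose i)) * P k a b / fact k"
      unfolding sum_distrib_right sum_divide_distrib
    proof (intro sum.cong refl)
      fix i assume "i \<in> {..k}"
      then have "i \<le> k" by simp
      then show "(-1)^(k-i) * P k a b / (fact i * fact (k-i)) =
          (-1::real)^(k-i) * (k choose i) * P k a b / fact k"
        by (simp add: binomial_fact)
    qed
    also have "\<dots> = (if k = 0 then (if a = b then 1 else 0) else 0)"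
      unfolding alt_binom P_def by simp
    finally show ?thesis .
  qed
  ultimately have "(\<lambda>k. if k = 0 then (if a = b then 1 else 0) else 0) sums
       (\<Sum>c\<in>S. mat_exp S M a c * mat_exp S M b c)" by simp
  moreover have "(\<lambda>k::nat. if k = 0 then (if a = b then 1 else 0) else 0) sums (if a = b then 1 else (0::real))"
    using sums_single[of 0 "\<lambda>_. if a = b then 1 else (0::real)"] by simp
  ultimately show ?thesis using sums_unique2 by blast
qed

lemma mat_exp_rowsum:
  assumes S: "finite S" and bnd: "\<And>x y. \<bar>M x y\<bar> \<le> B" and rs: "\<And>x. x \<in> S \<Longrightarrow> (\<Sum>y\<in>S. M x y) = 0"
    and a: "a \<in> S"
  shows "(\<Sum>b\<in>S. mat_exp S M a b) = 1"
proof -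
  have ps: "(\<Sum>b\<in>S. mat_pow S M k a b) = (if k = 0 then 1 else 0)" for k
  proof (cases k)
    case 0 then show ?thesis using S a by simp
  next
    case (Suc j)
    have "(\<Sum>b\<in>S. mat_pow S M k a b) = (\<Sum>b\<in>S. \<Sum>d\<in>S. mat_pow S M j a d * M d b)"
      unfolding Suc by (simp add: mat_mult_def)
    also have "\<dots> = (\<Sum>d\<in>S. \<Sum>b\<in>S. mat_pow S M j a d * M d b)"
      by (rule sum.swap)
    also have "\<dots> = (\<Sum>d\<in>S. mat_pow S M j a d * (\<Sum>b\<in>S. M d b))"
      by (simp add: sum_distrib_left)
    also have "\<dots> = 0" using rs by simp
    finally show ?thesis using Suc by simp
  qed
  have "(\<lambda>k. \<Sum>b\<in>S. mat_pow S M k a b / fact k) sums (\<Sum>b\<in>S. mat_exp S M a b)"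
    unfolding mat_exp_def
    by (rule sums_sum) (rule summable_sums, rule summable_norm_cancel, rule mat_pow_summable[OF S bnd])
  moreover have "(\<lambda>k. \<Sum>b\<in>S. mat_pow S M k a b / fact k) = (\<lambda>k. if k = 0 then 1 else 0)"
    by (rule ext) (simp add: sum_divide_distrib[symmetric] ps)
  ultimately have "(\<lambda>k. if k = 0 then 1 else 0) sums (\<Sum>b\<in>S. mat_exp S M a b)"
    by simp
  moreover have "(\<lambda>k::nat. if k = 0 then 1 else 0) sums (1::real)"
    using sums_single[of 0 "\<lambda>_. 1::real"] by simp
  ultimately show ?thesis using sums_unique2 by blast
qed


lemma conn_rowsum:
  assumes G: "group G" and C: "C \<subseteq> carrier G" and fin: "finite (carrier G)" and a: "a \<in> carrier G"
  shows "(\<Sum>b\<in>carrier G. conn_mat G C a b) = real (card C)"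
    and "(\<Sum>b\<in>carrier G. conn_mat G C b a) = real (card C)"
proof -
  interpret group G by (rule G)
  have fC: "finite C" using C fin finite_subset by blast
  have "(\<Sum>b\<in>carrier G. conn_mat G C a b) = (\<Sum>g\<in>C. \<Sum>b\<in>carrier G. perm_mat G g a b)"
    unfolding conn_mat_def by (rule sum.swap)
  also have "\<dots> = (\<Sum>g\<in>C. 1)"
  proof (intro sum.cong refl)
    fix g assume g: "g \<in> C"
    then have gS: "g \<in> carrier G" using C by blast
    have "(\<Sum>b\<in>carrier G. perm_mat G g a b) = (\<Sum>b\<in>carrier G. if b = g \<otimes>\<^bsub>G\<^esub> a then 1 else 0)"
      unfolding perm_mat_def using inv_solve_right'[OF gS _ a] by (intro sum.cong) auto
    also have "\<dots> = 1" using fin gS a by simp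
    finally show "(\<Sum>b\<in>carrier G. perm_mat G g a b) = 1" .
  qed
  finally show "(\<Sum>b\<in>carrier G. conn_mat G C a b) = real (card C)" by simp
  have "(\<Sum>b\<in>carrier G. conn_mat G C b a) = (\<Sum>g\<in>C. \<Sum>b\<in>carrier G. perm_mat G g b a)"
    unfolding conn_mat_def by (rule sum.swap)
  also have "\<dots> = (\<Sum>g\<in>C. 1)"
  proof (intro sum.cong refl)
    fix g assume g: "g \<in> C"
    then have gS: "g \<in> carrier G" using C by blast
    have "(\<Sum>b\<in>carrier G. perm_mat G g b a) = (\<Sum>b\<in>carrier G. if b = inv\<^bsub>G\<^esub> g \<otimes>\<^bsub>G\<^esub> a then 1 else 0)"
      unfolding perm_mat_def
    proof (intro sum.cong refl)
      fix b assume b: "b \<in> carrier G"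
      have "(a \<otimes>\<^bsub>G\<^esub> inv\<^bsub>G\<^esub> b = g) = (a = g \<otimes>\<^bsub>G\<^esub> b)" using inv_solve_right'[OF gS a b] .
      also have "\<dots> = (b = inv\<^bsub>G\<^esub> g \<otimes>\<^bsub>G\<^esub> a)" using inv_solve_left[OF b gS a] by simp
      finally show "(if a \<otimes>\<^bsub>G\<^esub> inv\<^bsub>G\<^esub> b = g then 1 else 0) = (if b = inv\<^bsub>G\<^esub> g \<otimes>\<^bsub>G\<^esub> a then 1 else (0::real))"
        by simp
    qed
    also have "\<dots> = 1" using fin gS a by simp
    finally show "(\<Sum>b\<in>carrier G. perm_mat G g b a) = 1" .
  qed
  finally show "(\<Sum>b\<in>carrier G. conn_mat G C b a) = real (card C)" by simp
qed

lemma conn_bound: "finite C \<Longrightarrow> \<bar>conn_mat G C a b\<bar> \<le> real (card C)"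
proof -
  assume "finite C"
  have "0 \<le> conn_mat G C a b" unfolding conn_mat_def perm_mat_def by (intro sum_nonneg) auto
  moreover have "conn_mat G C a b \<le> (\<Sum>g\<in>C. 1)" unfolding conn_mat_def perm_mat_def
    by (intro sum_mono) auto
  ultimately show ?thesis by simp
qed

lemma even_pm:
  assumes "finite S" "\<And>x. x \<in> S \<Longrightarrow> f x = 1 \<or> f x = -1" "(\<Sum>x\<in>S. f x) = (0::int)"
  shows "even (card S)"
proof -
  have "even (\<Sum>x\<in>S. f x + 1)" using assms(2) by (intro dvd_sum) fastforce
  then have "even (int (card S))" using assms(3) by (simp add: sum.distrib)
  then show ?thesis by simp
qed

theorem lemma10p3:
  fixes G :: "('a, 'b) monoid_scheme" and C :: "'a set"
  assumes "group G" and "finite (carrier G)" and "card (carrier G) > 2"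
    and "oriented_cayley G C"
    and "\<exists>t::real. \<forall>a\<in>carrier G. \<forall>b\<in>carrier G. \<forall>c\<in>carrier G. \<forall>d\<in>carrier G.
           \<bar>transition G C t a b\<bar> = \<bar>transition G C t c d\<bar>"
  shows "even (card (carrier G)) \<and> (\<exists>m::nat. card (carrier G) = m ^ 2)"
proof -
  define S where "S = carrier G"
  define n where "n = card S"
  obtain t where ht: "\<forall>a\<in>S. \<forall>b\<in>S. \<forall>c\<in>S. \<forall>d\<in>S.
           \<bar>transition G C t a b\<bar> = \<bar>transition G C t c d\<bar>" using assms(5) S_def by blast
  define M where "M = (\<lambda>a b. - t * skew_adj G C a b)"
  define U where "U = mat_exp S M"
  have UT: "transition G C t = U" unfolding U_def M_def transition_def S_def ..
  have fS: "finite S" using assms(2) S_def by simp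
  have CS: "C \<subseteq> S" using assms(4) unfolding oriented_cayley_def S_def by blast
  have fC: "finite C" using CS fS finite_subset by blast
  have skew: "\<And>x y. M y x = - M x y" unfolding M_def skew_adj_def by (simp add: algebra_simps)
  have bnd: "\<And>x y. \<bar>M x y\<bar> \<le> \<bar>t\<bar> * (2 * real (card C))"
  proof -
    fix x y
    have "\<bar>skew_adj G C x y\<bar> \<le> 2 * real (card C)"
      unfolding skew_adj_def using conn_bound[OF fC, of G x y] conn_bound[OF fC, of G y x] by linarith
    then show "\<bar>M x y\<bar> \<le> \<bar>t\<bar> * (2 * real (card C))"
      unfolding M_def abs_mult abs_minus by (intro mult_left_mono) auto
  qed
  have rs: "\<And>x. x \<in> S \<Longrightarrow> (\<Sum>y\<in>S. M x y) = 0"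
  proof -
    fix x assume x: "x \<in> S"
    have "(\<Sum>y\<in>S. M x y) = -t * ((\<Sum>y\<in>S. conn_mat G C x y) - (\<Sum>y\<in>S. conn_mat G C y x))"
      unfolding M_def skew_adj_def by (simp only: sum_subtractf[symmetric] sum_distrib_left)
    also have "\<dots> = 0"
      using conn_rowsum[OF assms(1) CS[unfolded S_def] assms(2) x[unfolded S_def]] unfolding S_def by simp
    finally show "(\<Sum>y\<in>S. M x y) = 0" .
  qed
  have orth: "\<And>a b. a \<in> S \<Longrightarrow> b \<in> S \<Longrightarrow> (\<Sum>c\<in>S. U a c * U b c) = (if a = b then 1 else 0)"
    unfolding U_def by (rule mat_exp_orth[OF fS skew bnd])
  have row: "\<And>a. a \<in> S \<Longrightarrow> (\<Sum>b\<in>S. U a b) = 1"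
    unfolding U_def by (rule mat_exp_rowsum[OF fS bnd rs])
  have n2: "n > 2" using assms(3) S_def n_def by simp
  then obtain a0 where a0: "a0 \<in> S" using n_def by fastforce
  have "card (S - {a0}) > 0" using n2 n_def a0 fS by simp
  then have "S - {a0} \<noteq> {}" by (metis card.empty less_irrefl)
  then obtain b0 where b0: "b0 \<in> S" "b0 \<noteq> a0" by blast
  define c where "c = \<bar>U a0 a0\<bar>"
  have absU: "\<And>x y. x \<in> S \<Longrightarrow> y \<in> S \<Longrightarrow> \<bar>U x y\<bar> = c"
    using ht a0 unfolding c_def UT by blast
  have sqU: "\<And>x y. x \<in> S \<Longrightarrow> y \<in> S \<Longrightarrow> U x y * U x y = c^2"
  proof -
    fix x y assume xy: "x \<in> S" "y \<in> S"
    have "U x y * U x y = \<bar>U x y\<bar> * \<bar>U x y\<bar>" by (rule abs_mult_self_eq[symmetric])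
    also have "\<dots> = c^2" using absU[OF xy] by (simp add: power2_eq_square)
    finally show "U x y * U x y = c^2" .
  qed
  have "(\<Sum>x\<in>S. U a0 x * U a0 x) = 1" using orth[OF a0 a0] by simp
  then have nc: "real n * c^2 = 1" using sqU a0 n_def by simp
  define sg where "sg = (\<lambda>a x. if U a x \<ge> 0 then 1 else (-1::int))"
  have Usg: "\<And>a x. a \<in> S \<Longrightarrow> x \<in> S \<Longrightarrow> U a x = c * of_int (sg a x)"
  proof -
    fix a x assume ax: "a \<in> S" "x \<in> S"
    have h: "c = \<bar>U a x\<bar>" using absU[OF ax] by simp
    show "U a x = c * of_int (sg a x)" unfolding sg_def h by simp
  qed
  define z where "z = (\<Sum>x\<in>S. sg a0 x)"
  have "c * of_int z = 1" using row[OF a0] Usg[OF a0] unfolding z_def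
    by (simp add: sum_distrib_left)
  then have "(c * of_int z)^2 = 1" by simp
  then have cz: "c^2 * (of_int z)^2 = 1" by (simp add: power_mult_distrib)
  have "real_of_int (z^2) = (of_int z)^2 * (real n * c^2)" using nc by simp
  also have "\<dots> = real n * (c^2 * (of_int z)^2)" by (simp only: mult_ac)
  also have "\<dots> = real n" using cz by simp
  finally have "real_of_int (z^2) = real n" .
  then have "int n = z^2" by linarith
  then have "int n = int ((nat \<bar>z\<bar>)^2)" by simp
  then have sq: "n = (nat \<bar>z\<bar>)^2" by (simp only: of_nat_eq_iff)
  have "(\<Sum>x\<in>S. U a0 x * U b0 x) = 0" using orth[OF a0 b0(1)] b0(2) by simp
  then have "c^2 * of_int (\<Sum>x\<in>S. sg a0 x * sg b0 x) = 0"
    using Usg a0 b0 by (simp add: sum_distrib_left power2_eq_square mult_ac)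
  moreover have "c^2 \<noteq> 0" using nc by auto
  ultimately have "real_of_int (\<Sum>x\<in>S. sg a0 x * sg b0 x) = 0" by (metis mult_eq_0_iff)
  then have "(\<Sum>x\<in>S. sg a0 x * sg b0 x) = 0" by (simp only: of_int_eq_0_iff)
  then have "even n" unfolding n_def
    by (rule even_pm[OF fS, rotated]) (auto simp: sg_def)
  then show ?thesis using sq unfolding n_def S_def by blast
qed

end
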